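(* Let $X$ be a compact K\"ahler space endowed with a symmetric bilinear (quadratic) form $q_X$ on the $\mathbb Q$-vector space of $\mathbb Q$-Weil divisors (or on $\mathrm{Cl}(X)\otimes\mathbb Q$) which is an intersection product, i.e. $q_X(D,D')\ge 0$ for any two distinct prime Weil divisors $D\neq D'$. Then every effective $\mathbb Q$-Weil divisor $D$ on $X$ has a unique rational $q_X$-Zariski decomposition: there is a unique way to write $D=P(D)+N(D)$ with $P(D),N(D)$ effective $\mathbb Q$-Weil divisors such that (1) $P(D)$ is $q_X$-nef, (2) $N(D)$ is $q_X$-exceptional or zero, and (3) $q_X(P(D),N(D))=0$. No assumption on the signature of $q_X$ is needed.
   Context: A prime divisor is a reduced irreducible effective divisor. A $\mathbb Q$-Weil divisor $P$ is $q_X$-nef if $q_X(P,E)\ge0$ for every effective Weil divisor $E$ (equivalently every prime Weil divisor $E$). An effective $\mathbb Q$-Weil divisor $E=\sum a_iE_i$ (with $E_i$ its distinct prime components) is $q_X$-exceptional if the Gram matrix $(q_X(E_i,E_j))_{i,j}$ is negative definite. *)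

theory Defs
  imports Complex_Main
begin

text \<open>The prime Weil divisors of X are the elements of a type 'p.
  A Q-Weil divisor is a finitely supported function 'p => rat (coefficients).\<close>

definition qdivs :: "('p \<Rightarrow> rat) set" where
  "qdivs = {D. finite {p. D p \<noteq> 0}}"

definition supp_div :: "('p \<Rightarrow> rat) \<Rightarrow> 'p set" where
  "supp_div D = {p. D p \<noteq> 0}"

definition prime_div :: "'p \<Rightarrow> ('p \<Rightarrow> rat)" where
  "prime_div p = (\<lambda>x. if x = p then 1 else 0)"

definition effective :: "('p \<Rightarrow> rat) \<Rightarrow> bool" where
  "effective D \<longleftrightarrow> D \<in> qdivs \<and> (\<forall>p. D p \<ge> 0)"

definition sym_bilinear :: "(('p \<Rightarrow> rat) \<Rightarrow> ('p \<Rightarrow> rat) \<Rightarrow> rat) \<Rightarrow> bool" where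
  "sym_bilinear q \<longleftrightarrow>
     (\<forall>D\<in>qdivs. \<forall>E\<in>qdivs. q D E = q E D) \<and>
     (\<forall>a D D' E. D \<in> qdivs \<longrightarrow> D' \<in> qdivs \<longrightarrow> E \<in> qdivs \<longrightarrow>
        q (\<lambda>x. a * D x + D' x) E = a * q D E + q D' E)"

definition intersection_product :: "(('p \<Rightarrow> rat) \<Rightarrow> ('p \<Rightarrow> rat) \<Rightarrow> rat) \<Rightarrow> bool" where
  "intersection_product q \<longleftrightarrow>
     (\<forall>D D'. D \<noteq> D' \<longrightarrow> q (prime_div D) (prime_div D') \<ge> 0)"

definition q_nef :: "(('p \<Rightarrow> rat) \<Rightarrow> ('p \<Rightarrow> rat) \<Rightarrow> rat) \<Rightarrow> ('p \<Rightarrow> rat) \<Rightarrow> bool" where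
  "q_nef q P \<longleftrightarrow>
     (\<forall>E. effective E \<and> (\<forall>p. E p \<in> \<int>) \<longrightarrow> q P E \<ge> 0)"

definition q_exceptional :: "(('p \<Rightarrow> rat) \<Rightarrow> ('p \<Rightarrow> rat) \<Rightarrow> rat) \<Rightarrow> ('p \<Rightarrow> rat) \<Rightarrow> bool" where
  "q_exceptional q E \<longleftrightarrow> effective E \<and>
     (\<forall>c :: 'p \<Rightarrow> real. (\<exists>i\<in>supp_div E. c i \<noteq> 0) \<longrightarrow>
        (\<Sum>i\<in>supp_div E. \<Sum>j\<in>supp_div E.
            c i * c j * real_of_rat (q (prime_div i) (prime_div j))) < 0)"

end

theory Submission
  imports Defs
begin


lemma sb_sym:
  assumes "sym_bilinear q" "D \<in> qdivs" "E \<in> qdivs"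
  shows "q D E = q E D"
proof -
  from assms(1) have "\<forall>D\<in>qdivs. \<forall>E\<in>qdivs. q D E = q E D" unfolding sym_bilinear_def by (rule conjunct1)
  from this[rule_format, OF assms(2) assms(3)] show ?thesis .
qed

lemma sb_lin:
  assumes "sym_bilinear q" "D \<in> qdivs" "D' \<in> qdivs" "E \<in> qdivs"
  shows "q (\<lambda>x. a * D x + D' x) E = a * q D E + q D' E"
proof -
  from assms(1) have "\<forall>a D D' E. D \<in> qdivs \<longrightarrow> D' \<in> qdivs \<longrightarrow> E \<in> qdivs \<longrightarrow>
        q (\<lambda>x. a * D x + D' x) E = a * q D E + q D' E" unfolding sym_bilinear_def by (rule conjunct2)
  from this[rule_format, OF assms(2) assms(3) assms(4)] show ?thesis .
qed


lemma q_zero: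
  assumes "sym_bilinear q" "E \<in> qdivs"
  shows "q (\<lambda>_. 0) E = 0"
proof -
  have z: "(\<lambda>_. 0::rat) \<in> qdivs" by (simp add: qdivs_def)
  have "q (\<lambda>x. 1 * 0 + 0) E = 1 * q (\<lambda>_. 0) E + q (\<lambda>_. 0) E"
    using sb_lin[OF assms(1) z z assms(2)] .
  then show ?thesis by simp
qed

lemma prime_div_qdivs: "prime_div p \<in> qdivs"
  by (simp add: qdivs_def prime_div_def)

lemma expand1:
  assumes sb: "sym_bilinear q" and E: "E \<in> qdivs" and fin: "finite S"
  shows "\<forall>X. (\<forall>x. x \<notin> S \<longrightarrow> X x = 0) \<longrightarrow> q X E = (\<Sum>j\<in>S. X j * q (prime_div j) E)"
  using fin
proof (induction S rule: finite_induct)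
  case empty
  show ?case
  proof (intro allI impI)
    fix X :: "'a \<Rightarrow> rat" assume "\<forall>x. x \<notin> {} \<longrightarrow> X x = 0"
    then have "X = (\<lambda>_. 0)" by auto
    then show "q X E = (\<Sum>j\<in>{}. X j * q (prime_div j) E)" using q_zero[OF sb E] by simp
  qed
next
  case (insert s F)
  show ?case
  proof (intro allI impI)
    fix X :: "'a \<Rightarrow> rat" assume X: "\<forall>x. x \<notin> insert s F \<longrightarrow> X x = 0"
    define X' where "X' = X(s := 0)"
    have X'0: "\<forall>x. x \<notin> F \<longrightarrow> X' x = 0" using X by (auto simp: X'_def)
    have X'q: "X' \<in> qdivs"
    proof -
      have "{p. X' p \<noteq> 0} \<subseteq> F" using X'0 by auto
      then show ?thesis using insert(1) finite_subset unfolding qdivs_def by blast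
    qed
    have eq: "X = (\<lambda>x. X s * prime_div s x + X' x)"
      by (auto simp: X'_def prime_div_def)
    have "q X E = X s * q (prime_div s) E + q X' E"
      by (subst eq) (rule sb_lin[OF sb prime_div_qdivs X'q E])
    also have "q X' E = (\<Sum>j\<in>F. X' j * q (prime_div j) E)" using insert(3) X'0 by blast
    also have "\<dots> = (\<Sum>j\<in>F. X j * q (prime_div j) E)"
      using insert(2) by (intro sum.cong) (auto simp: X'_def)
    finally show "q X E = (\<Sum>j\<in>insert s F. X j * q (prime_div j) E)"
      using insert(1,2) by simp
  qed
qed

lemma expand2:
  assumes sb: "sym_bilinear q" and E: "E \<in> qdivs" and fin: "finite S"
    and X0: "\<forall>x. x \<notin> S \<longrightarrow> X x = 0"
  shows "q E X = (\<Sum>j\<in>S. X j * q E (prime_div j))"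
proof -
  have Xq: "X \<in> qdivs"
  proof -
    have "{p. X p \<noteq> 0} \<subseteq> S" using X0 by auto
    then show ?thesis using fin finite_subset unfolding qdivs_def by blast
  qed
  have "q E X = q X E" using sb_sym[OF sb E Xq] .
  also have "\<dots> = (\<Sum>j\<in>S. X j * q (prime_div j) E)" using expand1[OF sb E fin] X0 by blast
  also have "\<dots> = (\<Sum>j\<in>S. X j * q E (prime_div j))"
  proof -
    have "\<And>j. q (prime_div j) E = q E (prime_div j)"
      using sb_sym[OF sb prime_div_qdivs E] .
    then show ?thesis by simp
  qed
  finally show ?thesis .
qed



definition symm :: "('p \<Rightarrow> 'p \<Rightarrow> rat) \<Rightarrow> bool" where
  "symm G \<longleftrightarrow> (\<forall>i j. G i j = G j i)"
definition metz :: "('p \<Rightarrow> 'p \<Rightarrow> rat) \<Rightarrow> bool" where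
  "metz G \<longleftrightarrow> (\<forall>i j. i \<noteq> j \<longrightarrow> 0 \<le> G i j)"
definition altA :: "('p \<Rightarrow> 'p \<Rightarrow> rat) \<Rightarrow> 'p set \<Rightarrow> bool" where
  "altA G T \<longleftrightarrow> (\<exists>y. (\<forall>i. 0 \<le> y i) \<and> (\<forall>i. i \<notin> T \<longrightarrow> y i = 0) \<and> (\<exists>i\<in>T. y i \<noteq> 0) \<and>
      (\<forall>i\<in>T. 0 < y i \<longrightarrow> 0 \<le> (\<Sum>j\<in>T. G i j * y j)))"
definition ndT :: "('p \<Rightarrow> 'p \<Rightarrow> rat) \<Rightarrow> 'p set \<Rightarrow> bool" where
  "ndT G T \<longleftrightarrow> (\<forall>c :: 'p \<Rightarrow> real. (\<exists>i\<in>T. c i \<noteq> 0) \<longrightarrow>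
      (\<Sum>i\<in>T. \<Sum>j\<in>T. c i * c j * real_of_rat (G i j)) < 0)"
definition surjT :: "('p \<Rightarrow> 'p \<Rightarrow> rat) \<Rightarrow> 'p set \<Rightarrow> bool" where
  "surjT G T \<longleftrightarrow> (\<forall>r. \<exists>x. \<forall>i\<in>T. (\<Sum>j\<in>T. G i j * x j) = r i)"

lemma alt_lemma:
  assumes "finite T"
  shows "\<forall>G. symm G \<longrightarrow> metz G \<longrightarrow> altA G T \<or> (ndT G T \<and> surjT G T)"
  using assms
proof (induction T rule: finite_induct)
  case empty
  then show ?case by (simp add: ndT_def surjT_def)
next
  case (insert t F)
  show ?case
  proof (intro allI impI)
    fix G :: "'a \<Rightarrow> 'a \<Rightarrow> rat"
    assume sy: "symm G" and mz: "metz G"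
    show "altA G (insert t F) \<or> (ndT G (insert t F) \<and> surjT G (insert t F))"
    proof (cases "0 \<le> G t t")
      case True
      define y where "y = (\<lambda>i. if i = t then (1::rat) else 0)"
      have "(\<Sum>j\<in>insert t F. G i j * y j) = G i t" for i
        using insert(1,2) by (simp add: y_def if_distrib sum.If_cases)
      then have "altA G (insert t F)"
        unfolding altA_def using True by (intro exI[of _ y]) (auto simp: y_def)
      then show ?thesis by blast
    next
      case False
      then have gtt: "G t t < 0" by simp
      define G' where "G' = (\<lambda>i j. G i j - G i t * G t j / G t t)"
      have sy': "symm G'" using sy unfolding symm_def G'_def by (auto simp: mult.commute)
      have mz': "metz G'"
        unfolding metz_def
      proof (intro allI impI)
        fix i j :: 'a assume ij: "i \<noteq> j"
        show "0 \<le> G' i j"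
        proof (cases "i = t \<or> j = t")
          case True
          then show ?thesis using gtt sy unfolding G'_def symm_def by auto
        next
          case False
          have a: "0 \<le> G i j" "0 \<le> G i t" "0 \<le> G t j" using mz ij False unfolding metz_def by auto
          have "G i t * G t j / G t t \<le> 0"
            using a gtt by (simp add: divide_nonneg_neg)
          then show ?thesis using a unfolding G'_def by simp
        qed
      qed
      have Fsub: "\<And>j. j \<in> F \<Longrightarrow> j \<noteq> t" using insert(2) by auto
      from insert(3) sy' mz' have IH: "altA G' F \<or> (ndT G' F \<and> surjT G' F)" by blast
      then show ?thesis
      proof
        assume "altA G' F"
        then obtain y' where y'0: "\<forall>i. 0 \<le> y' i" and y'out: "\<forall>i. i \<notin> F \<longrightarrow> y' i = 0"
          and y'nz: "\<exists>i\<in>F. y' i \<noteq> 0"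
          and y'pos: "\<forall>i\<in>F. 0 < y' i \<longrightarrow> 0 \<le> (\<Sum>j\<in>F. G' i j * y' j)"
          unfolding altA_def by blast
        define s where "s = - (\<Sum>j\<in>F. G t j * y' j) / G t t"
        have snn: "0 \<le> s"
        proof -
          have gtj: "\<And>j. j \<in> F \<Longrightarrow> 0 \<le> G t j" using mz Fsub unfolding metz_def by metis
          have "0 \<le> (\<Sum>j\<in>F. G t j * y' j)"
            using gtj y'0 by (intro sum_nonneg mult_nonneg_nonneg) auto
          then show ?thesis unfolding s_def using gtt by (simp add: divide_nonneg_neg)
        qed
        define y where "y = y'(t := s)"
        have yF: "\<And>j. j \<in> F \<Longrightarrow> y j = y' j" using Fsub by (auto simp: y_def)
        have sumF: "(\<Sum>j\<in>F. G i j * y j) = (\<Sum>j\<in>F. G i j * y' j)" for i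
          using yF by simp
        have sumT: "(\<Sum>j\<in>insert t F. G i j * y j) = G i t * s + (\<Sum>j\<in>F. G i j * y' j)" for i
          using insert(1,2) sumF by (simp add: y_def)
        have "altA G (insert t F)"
          unfolding altA_def
        proof (intro exI[of _ y] conjI ballI impI allI)
          show "0 \<le> y i" for i using y'0 snn by (simp add: y_def)
          show "i \<notin> insert t F \<Longrightarrow> y i = 0" for i using y'out by (simp add: y_def)
          show "\<exists>i\<in>insert t F. y i \<noteq> 0" using y'nz yF by auto
          fix i assume iT: "i \<in> insert t F" and yi: "0 < y i"
          show "0 \<le> (\<Sum>j\<in>insert t F. G i j * y j)"
          proof (cases "i = t")
            case True
            have "G t t * s + (\<Sum>j\<in>F. G t j * y' j) = 0" using gtt unfolding s_def by simp
            then show ?thesis using True sumT by simp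
          next
            case False
            then have iF: "i \<in> F" using iT by simp
            have "(\<Sum>j\<in>F. G' i j * y' j) = (\<Sum>j\<in>F. G i j * y' j) - G i t / G t t * (\<Sum>j\<in>F. G t j * y' j)"
              unfolding G'_def by (simp add: algebra_simps sum_subtractf sum_distrib_left)
            also have "\<dots> = G i t * s + (\<Sum>j\<in>F. G i j * y' j)"
              unfolding s_def by (simp add: field_simps)
            finally have "(\<Sum>j\<in>insert t F. G i j * y j) = (\<Sum>j\<in>F. G' i j * y' j)"
              using sumT by simp
            moreover have "0 < y' i" using yi yF iF by simp
            ultimately show ?thesis using y'pos iF by simp
          qed
        qed
        then show ?thesis by blast
      next
        assume "ndT G' F \<and> surjT G' F"
        then have nd': "ndT G' F" and su': "surjT G' F" by auto
        have nd: "ndT G (insert t F)"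
          unfolding ndT_def
        proof (intro allI impI)
          fix c :: "'a \<Rightarrow> real" assume cnz: "\<exists>i\<in>insert t F. c i \<noteq> 0"
          define g where "g = (\<lambda>i j. real_of_rat (G i j))"
          have gsym: "g i j = g j i" for i j using sy unfolding symm_def g_def by metis
          define a where "a = g t t"
          have aneg: "a < 0" using gtt unfolding a_def g_def by simp
          define s where "s = (\<Sum>j\<in>F. g t j * c j)"
          define Q' where "Q' = (\<Sum>i\<in>F. \<Sum>j\<in>F. c i * c j * real_of_rat (G' i j))"
          have g': "real_of_rat (G' i j) = g i j - g i t * g t j / a" for i j
            unfolding G'_def g_def a_def by (simp add: of_rat_diff of_rat_mult of_rat_divide)
          have Q'eq: "Q' = (\<Sum>i\<in>F. \<Sum>j\<in>F. c i * c j * g i j) - s * s / a"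
          proof -
            have "Q' = (\<Sum>i\<in>F. \<Sum>j\<in>F. c i * c j * g i j - (c i * g i t) * (g t j * c j) / a)"
              unfolding Q'_def g' by (simp add: algebra_simps)
            also have "\<dots> = (\<Sum>i\<in>F. \<Sum>j\<in>F. c i * c j * g i j) - (\<Sum>i\<in>F. \<Sum>j\<in>F. (c i * g i t) * (g t j * c j) / a)"
              by (simp add: sum_subtractf)
            also have "(\<Sum>i\<in>F. \<Sum>j\<in>F. (c i * g i t) * (g t j * c j) / a) = (\<Sum>i\<in>F. c i * g i t) * s / a"
              unfolding s_def by (simp add: sum_product sum_divide_distrib)
            also have "(\<Sum>i\<in>F. c i * g i t) = s" unfolding s_def using gsym by (simp add: mult.commute)
            finally show ?thesis .
          qed
          have tot: "(\<Sum>i\<in>insert t F. \<Sum>j\<in>insert t F. c i * c j * g i j)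
              = a * c t * c t + 2 * c t * s + (\<Sum>i\<in>F. \<Sum>j\<in>F. c i * c j * g i j)"
          proof -
            have "(\<Sum>i\<in>insert t F. \<Sum>j\<in>insert t F. c i * c j * g i j)
                = (\<Sum>i\<in>insert t F. c i * c t * g i t + (\<Sum>j\<in>F. c i * c j * g i j))"
              using insert(1,2) by simp
            also have "\<dots> = (c t * c t * g t t + (\<Sum>j\<in>F. c t * c j * g t j)) +
                 (\<Sum>i\<in>F. c i * c t * g i t + (\<Sum>j\<in>F. c i * c j * g i j))"
              using insert(1,2) by simp
            also have "\<dots> = a * c t * c t + 2 * c t * s + (\<Sum>i\<in>F. \<Sum>j\<in>F. c i * c j * g i j)"
            proof -
              have "(\<Sum>j\<in>F. c t * c j * g t j) = c t * s" unfolding s_def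
                by (simp add: sum_distrib_left algebra_simps)
              moreover have "(\<Sum>i\<in>F. c i * c t * g i t) = c t * s" unfolding s_def
                using gsym by (simp add: sum_distrib_left algebra_simps)
              ultimately show ?thesis unfolding a_def by (simp add: sum.distrib algebra_simps)
            qed
            finally show ?thesis .
          qed
          have sq: "a * c t * c t + 2 * c t * s + s * s / a = a * (c t + s / a) ^ 2"
            using aneg by (simp add: field_simps power2_eq_square)
          have main: "(\<Sum>i\<in>insert t F. \<Sum>j\<in>insert t F. c i * c j * g i j) = a * (c t + s / a) ^ 2 + Q'"
            using tot Q'eq sq by simp
          have t1: "a * (c t + s / a) ^ 2 \<le> 0" using aneg by (simp add: mult_nonpos_nonneg)
          show "(\<Sum>i\<in>insert t F. \<Sum>j\<in>insert t F. c i * c j * real_of_rat (G i j)) < 0"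
          proof (cases "\<exists>i\<in>F. c i \<noteq> 0")
            case True
            then have "Q' < 0" using nd' unfolding ndT_def Q'_def by blast
            then show ?thesis using main t1 unfolding g_def by simp
          next
            case False
            then have ct: "c t \<noteq> 0" using cnz by auto
            have s0: "s = 0" using False unfolding s_def by simp
            have q0: "Q' = 0" using False unfolding Q'_def by simp
            have "a * (c t + s / a) ^ 2 < 0" using aneg ct s0 by (simp add: mult_neg_pos)
            then show ?thesis using main q0 unfolding g_def by simp
          qed
        qed
        have su: "surjT G (insert t F)"
          unfolding surjT_def
        proof
          fix r :: "'a \<Rightarrow> rat"
          define r' where "r' = (\<lambda>i. r i - G i t * r t / G t t)"
          obtain x' where x': "\<forall>i\<in>F. (\<Sum>j\<in>F. G' i j * x' j) = r' i"
            using su' unfolding surjT_def by blast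
          define xt where "xt = (r t - (\<Sum>j\<in>F. G t j * x' j)) / G t t"
          define x where "x = x'(t := xt)"
          have sumT: "(\<Sum>j\<in>insert t F. G i j * x j) = G i t * xt + (\<Sum>j\<in>F. G i j * x' j)" for i
          proof -
            have "(\<Sum>j\<in>F. G i j * x j) = (\<Sum>j\<in>F. G i j * x' j)"
              using Fsub by (intro sum.cong) (auto simp: x_def)
            then show ?thesis using insert(1,2) by (simp add: x_def)
          qed
          show "\<exists>x. \<forall>i\<in>insert t F. (\<Sum>j\<in>insert t F. G i j * x j) = r i"
          proof (intro exI[of _ x] ballI)
            fix i assume iT: "i \<in> insert t F"
            show "(\<Sum>j\<in>insert t F. G i j * x j) = r i"
            proof (cases "i = t")
              case True
              then show ?thesis using sumT gtt unfolding xt_def by simp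
            next
              case False
              then have iF: "i \<in> F" using iT by simp
              have "(\<Sum>j\<in>F. G' i j * x' j) = (\<Sum>j\<in>F. G i j * x' j) - G i t / G t t * (\<Sum>j\<in>F. G t j * x' j)"
                unfolding G'_def by (simp add: algebra_simps sum_subtractf sum_distrib_left)
              then have "r' i = (\<Sum>j\<in>F. G i j * x' j) - G i t / G t t * (\<Sum>j\<in>F. G t j * x' j)"
                using x' iF by simp
              then have h1: "r i - G i t * r t / G t t = (\<Sum>j\<in>F. G i j * x' j) - G i t / G t t * (\<Sum>j\<in>F. G t j * x' j)"
                unfolding r'_def .
              have h2: "G i t * xt = G i t * r t / G t t - G i t / G t t * (\<Sum>j\<in>F. G t j * x' j)"
                unfolding xt_def using gtt by (simp add: field_simps)
              show ?thesis using sumT[of i] h1 h2 by linarith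
            qed
          qed
        qed
        show ?thesis using nd su by blast
      qed
    qed
  qed
qed



lemma ndT_subset:
  assumes fin: "finite T" and sub: "T' \<subseteq> T" and nd: "ndT G T"
  shows "ndT G T'"
  unfolding ndT_def
proof (intro allI impI)
  fix c :: "'a \<Rightarrow> real" assume cnz: "\<exists>i\<in>T'. c i \<noteq> 0"
  define c' where "c' = (\<lambda>i. if i \<in> T' then c i else 0)"
  have "\<exists>i\<in>T. c' i \<noteq> 0" using cnz sub by (auto simp: c'_def)
  then have lt: "(\<Sum>i\<in>T. \<Sum>j\<in>T. c' i * c' j * real_of_rat (G i j)) < 0"
    using nd unfolding ndT_def by blast
  have inner: "(\<Sum>j\<in>T. c' i * c' j * real_of_rat (G i j)) = (\<Sum>j\<in>T'. c' i * c' j * real_of_rat (G i j))" for i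
    using fin sub by (intro sum.mono_neutral_right) (auto simp: c'_def)
  have "(\<Sum>i\<in>T. \<Sum>j\<in>T. c' i * c' j * real_of_rat (G i j)) = (\<Sum>i\<in>T'. \<Sum>j\<in>T'. c' i * c' j * real_of_rat (G i j))"
    unfolding inner using fin sub by (intro sum.mono_neutral_right) (auto simp: c'_def)
  also have "\<dots> = (\<Sum>i\<in>T'. \<Sum>j\<in>T'. c i * c j * real_of_rat (G i j))"
    by (intro sum.cong refl) (auto simp: c'_def)
  finally show "(\<Sum>i\<in>T'. \<Sum>j\<in>T'. c i * c j * real_of_rat (G i j)) < 0" using lt by simp
qed

lemma ndT_rat:
  assumes nd: "ndT G T" and nz: "\<exists>i\<in>T. m i \<noteq> 0"
  shows "(\<Sum>i\<in>T. \<Sum>j\<in>T. m i * m j * G i j) < 0"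
proof -
  have H: "\<And>c. (\<exists>i\<in>T. c i \<noteq> 0) \<Longrightarrow> (\<Sum>i\<in>T. \<Sum>j\<in>T. c i * c j * real_of_rat (G i j)) < 0"
    using nd unfolding ndT_def by blast
  have "\<exists>i\<in>T. real_of_rat (m i) \<noteq> 0" using nz by simp
  then have "(\<Sum>i\<in>T. \<Sum>j\<in>T. real_of_rat (m i) * real_of_rat (m j) * real_of_rat (G i j)) < 0"
    by (rule H)
  then have "real_of_rat (\<Sum>i\<in>T. \<Sum>j\<in>T. m i * m j * G i j) < 0"
    by (simp add: of_rat_sum of_rat_mult)
  then show ?thesis by simp
qed

lemma invpos:
  assumes fin: "finite T" and nd: "ndT G T" and mz: "metz G"
    and h: "\<forall>i\<in>T. (\<Sum>j\<in>T. G i j * z j) \<le> 0"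
  shows "\<forall>i\<in>T. 0 \<le> z i"
proof (rule ccontr)
  assume "\<not> (\<forall>i\<in>T. 0 \<le> z i)"
  then obtain i0 where i0: "i0 \<in> T" "z i0 < 0" by auto
  define m where "m = (\<lambda>i. if z i < 0 then - z i else 0)"
  define p where "p = (\<lambda>i. if z i < 0 then 0 else z i)"
  have zpm: "z j = p j - m j" for j by (simp add: p_def m_def)
  have m0: "0 \<le> m i" for i by (simp add: m_def)
  have "(\<Sum>i\<in>T. m i * (\<Sum>j\<in>T. G i j * z j)) \<le> 0"
    using h m0 by (intro sum_nonpos) (simp add: mult_nonneg_nonpos)
  moreover have "(\<Sum>i\<in>T. m i * (\<Sum>j\<in>T. G i j * z j)) =
      (\<Sum>i\<in>T. \<Sum>j\<in>T. m i * G i j * p j) - (\<Sum>i\<in>T. \<Sum>j\<in>T. m i * m j * G i j)"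
    by (simp add: zpm sum_distrib_left sum_subtractf[symmetric] algebra_simps)
  moreover have "0 \<le> (\<Sum>i\<in>T. \<Sum>j\<in>T. m i * G i j * p j)"
  proof (intro sum_nonneg)
    fix i j
    show "0 \<le> m i * G i j * p j"
    proof (cases "i = j")
      case True then show ?thesis by (simp add: m_def p_def)
    next
      case False
      then have "0 \<le> G i j" using mz unfolding metz_def by blast
      moreover have "0 \<le> p j" by (simp add: p_def)
      ultimately show ?thesis using m0[of i] by simp
    qed
  qed
  moreover have "(\<Sum>i\<in>T. \<Sum>j\<in>T. m i * m j * G i j) < 0"
  proof -
    have "\<exists>i\<in>T. m i \<noteq> 0" using i0 unfolding m_def by force
    then show ?thesis by (rule ndT_rat[OF nd])
  qed
  ultimately show False by linarith
qed

definition nefc :: "'p set \<Rightarrow> ('p \<Rightarrow> 'p \<Rightarrow> rat) \<Rightarrow> ('p \<Rightarrow> rat) \<Rightarrow> bool" where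
  "nefc S G P \<longleftrightarrow> (\<forall>c. 0 \<le> (\<Sum>j\<in>S. P j * G j c))"



lemma exist_coord:
  fixes D :: "'p \<Rightarrow> rat" and G :: "'p \<Rightarrow> 'p \<Rightarrow> rat"
  assumes finS: "finite S" and Dout: "\<forall>i. i \<notin> S \<longrightarrow> D i = 0"
    and sy: "symm G" and mz: "metz G"
  shows "\<forall>P. (\<forall>i. 0 \<le> P i \<and> P i \<le> D i) \<longrightarrow> nefc S G P \<longrightarrow> card {i. P i < D i} = n \<longrightarrow>
    (\<exists>P'. (\<forall>i. 0 \<le> P' i \<and> P' i \<le> D i) \<and> nefc S G P' \<and>
       (\<forall>c. P' c < D c \<longrightarrow> (\<Sum>j\<in>S. P' j * G j c) = 0) \<and> ndT G {i. P' i < D i})"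
proof (induction n rule: less_induct)
  case (less n)
  show ?case
  proof (intro allI impI)
    fix P :: "'p \<Rightarrow> rat"
    assume Pb: "\<forall>i. 0 \<le> P i \<and> P i \<le> D i" and Pn: "nefc S G P" and card: "card {i. P i < D i} = n"
    define T where "T = {i. P i < D i}"
    have TS: "T \<subseteq> S"
    proof
      fix i assume "i \<in> T"
      then have "P i < D i" by (simp add: T_def)
      moreover have "0 \<le> P i" using Pb by blast
      ultimately show "i \<in> S" using Dout by fastforce
    qed
    have finT: "finite T" using finite_subset[OF TS finS] .
    have PDout: "\<And>i. i \<notin> T \<Longrightarrow> P i = D i" using Pb unfolding T_def by (metis antisym not_less mem_Collect_eq)
    have Gsym: "\<And>i j. G i j = G j i" using sy unfolding symm_def by blast
    have Gmz: "\<And>i j. i \<noteq> j \<Longrightarrow> 0 \<le> G i j" using mz unfolding metz_def by blast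
    have IH: "\<And>P1. (\<forall>i. 0 \<le> P1 i \<and> P1 i \<le> D i) \<Longrightarrow> nefc S G P1 \<Longrightarrow> {i. P1 i < D i} \<subset> T \<Longrightarrow>
       (\<exists>P'. (\<forall>i. 0 \<le> P' i \<and> P' i \<le> D i) \<and> nefc S G P' \<and>
       (\<forall>c. P' c < D c \<longrightarrow> (\<Sum>j\<in>S. P' j * G j c) = 0) \<and> ndT G {i. P' i < D i})"
    proof -
      fix P1 assume a: "\<forall>i. 0 \<le> P1 i \<and> P1 i \<le> D i" "nefc S G P1" "{i. P1 i < D i} \<subset> T"
      have "card {i. P1 i < D i} < n" using psubset_card_mono[OF finT a(3)] card unfolding T_def by simp
      then show "?thesis P1" using less a(1,2) by blast
    qed
    from alt_lemma[OF finT] sy mz have "altA G T \<or> (ndT G T \<and> surjT G T)" by blast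
    then show "\<exists>P'. (\<forall>i. 0 \<le> P' i \<and> P' i \<le> D i) \<and> nefc S G P' \<and>
       (\<forall>c. P' c < D c \<longrightarrow> (\<Sum>j\<in>S. P' j * G j c) = 0) \<and> ndT G {i. P' i < D i}"
    proof
      assume "altA G T"
      then obtain y where y0: "\<forall>i. 0 \<le> y i" and yout: "\<forall>i. i \<notin> T \<longrightarrow> y i = 0"
        and ynz: "\<exists>i\<in>T. y i \<noteq> 0" and ypos: "\<forall>i\<in>T. 0 < y i \<longrightarrow> 0 \<le> (\<Sum>j\<in>T. G i j * y j)"
        unfolding altA_def by blast
      define Y where "Y = {i\<in>T. 0 < y i}"
      have finY: "finite Y" using finT unfolding Y_def by simp
      have Yne: "Y \<noteq> {}" using ynz y0 unfolding Y_def by (auto simp: less_le)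
      have ynY: "\<And>i. i \<notin> Y \<Longrightarrow> y i = 0" using y0 yout unfolding Y_def by (auto simp: less_le)
      define ratio where "ratio = (\<lambda>i. (D i - P i) / y i)"
      define lam where "lam = Min (ratio ` Y)"
      have "lam \<in> ratio ` Y" unfolding lam_def using finY Yne by (intro Min_in) auto
      then obtain i0 where i0: "i0 \<in> Y" "lam = ratio i0" by auto
      have lamle: "\<And>i. i \<in> Y \<Longrightarrow> lam \<le> ratio i" unfolding lam_def using finY by (intro Min_le) auto
      have i0T: "P i0 < D i0" "0 < y i0" using i0(1) unfolding Y_def T_def by auto
      have lampos: "0 < lam" using i0 i0T unfolding ratio_def by simp
      define P1 where "P1 = (\<lambda>i. P i + lam * y i)"
      have P1b: "\<forall>i. 0 \<le> P1 i \<and> P1 i \<le> D i"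
      proof
        fix i
        show "0 \<le> P1 i \<and> P1 i \<le> D i"
        proof (cases "i \<in> Y")
          case True
          then have yi: "0 < y i" unfolding Y_def by simp
          have "lam \<le> (D i - P i) / y i" using lamle[OF True] unfolding ratio_def .
          then have "lam * y i \<le> D i - P i" using yi by (simp add: pos_le_divide_eq)
          then show ?thesis using Pb lampos yi unfolding P1_def by simp
        next
          case False
          then show ?thesis using ynY Pb unfolding P1_def by simp
        qed
      qed
      have P1n: "nefc S G P1"
        unfolding nefc_def
      proof
        fix c
        have split: "(\<Sum>j\<in>S. P1 j * G j c) = (\<Sum>j\<in>S. P j * G j c) + lam * (\<Sum>j\<in>S. y j * G j c)"
          unfolding P1_def by (simp add: algebra_simps sum.distrib sum_distrib_left)
        have ynn: "0 \<le> (\<Sum>j\<in>S. y j * G j c)"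
        proof (cases "c \<in> Y")
          case True
          have "(\<Sum>j\<in>S. y j * G j c) = (\<Sum>j\<in>T. y j * G j c)"
            using finS TS yout by (intro sum.mono_neutral_right) auto
          also have "\<dots> = (\<Sum>j\<in>T. G c j * y j)" using Gsym by (simp add: mult.commute)
          finally show ?thesis using ypos True unfolding Y_def by simp
        next
          case False
          then have "y c = 0" using ynY by simp
          then show ?thesis using y0 Gmz
            by (intro sum_nonneg) (metis mult_nonneg_nonneg mult_zero_left)
        qed
        show "0 \<le> (\<Sum>j\<in>S. P1 j * G j c)"
          using split ynn lampos Pn unfolding nefc_def by simp
      qed
      have sub: "{i. P1 i < D i} \<subset> T"
      proof -
        have "{i. P1 i < D i} \<subseteq> T" using y0 lampos unfolding P1_def T_def
          by (auto intro: le_less_trans[rotated] simp: mult_nonneg_nonneg)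
        moreover have "i0 \<in> T" using i0(1) unfolding Y_def by simp
        moreover have "P1 i0 = D i0" using i0 i0T unfolding P1_def ratio_def by simp
        ultimately show ?thesis by auto
      qed
      show ?thesis using IH[OF P1b P1n sub] .
    next
      assume "ndT G T \<and> surjT G T"
      then have nd: "ndT G T" and su: "surjT G T" by auto
      define r where "r = (\<lambda>i. - (\<Sum>j\<in>S - T. G i j * D j))"
      obtain x where x: "\<forall>i\<in>T. (\<Sum>j\<in>T. G i j * x j) = r i" using su unfolding surjT_def by blast
      define P' where "P' = (\<lambda>i. if i \<in> T then x i else D i)"
      have splitS: "(\<Sum>j\<in>S. f j) = (\<Sum>j\<in>S - T. f j) + (\<Sum>j\<in>T. f j)" for f :: "'p \<Rightarrow> rat"
        using sum.subset_diff[OF TS finS] .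
      have P'zero: "\<And>c. c \<in> T \<Longrightarrow> (\<Sum>j\<in>S. P' j * G j c) = 0"
      proof -
        fix c assume cT: "c \<in> T"
        have "(\<Sum>j\<in>S. P' j * G j c) = (\<Sum>j\<in>S - T. G c j * D j) + (\<Sum>j\<in>T. G c j * x j)"
          unfolding splitS using Gsym by (simp add: P'_def mult.commute)
        then show "(\<Sum>j\<in>S. P' j * G j c) = 0" using x cT unfolding r_def by simp
      qed
      define z where "z = (\<lambda>i. P' i - P i)"
      have zout: "\<And>i. i \<notin> T \<Longrightarrow> z i = 0" using PDout unfolding z_def P'_def by simp
      have zT: "\<forall>i\<in>T. (\<Sum>j\<in>T. G i j * z j) \<le> 0"
      proof
        fix i assume iT: "i \<in> T"
        have "(\<Sum>j\<in>T. G i j * z j) = (\<Sum>j\<in>S. z j * G j i)"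
        proof -
          have "(\<Sum>j\<in>S. z j * G j i) = (\<Sum>j\<in>T. z j * G j i)"
            using finS TS zout by (intro sum.mono_neutral_right) auto
          then show ?thesis using Gsym by (simp add: mult.commute)
        qed
        also have "\<dots> = (\<Sum>j\<in>S. P' j * G j i) - (\<Sum>j\<in>S. P j * G j i)"
          unfolding z_def by (simp add: algebra_simps sum_subtractf)
        finally show "(\<Sum>j\<in>T. G i j * z j) \<le> 0" using P'zero[OF iT] Pn unfolding nefc_def by simp
      qed
      have z0: "\<And>i. 0 \<le> z i" using invpos[OF finT nd mz zT] zout by (metis order_refl)
      have P'n: "nefc S G P'"
        unfolding nefc_def
      proof
        fix c
        show "0 \<le> (\<Sum>j\<in>S. P' j * G j c)"
        proof (cases "c \<in> T")
          case True then show ?thesis using P'zero by simp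
        next
          case False
          have "(\<Sum>j\<in>S. P' j * G j c) = (\<Sum>j\<in>S. P j * G j c) + (\<Sum>j\<in>S. z j * G j c)"
            unfolding z_def by (simp add: algebra_simps sum_subtractf)
          moreover have "0 \<le> (\<Sum>j\<in>S. z j * G j c)"
          proof (intro sum_nonneg)
            fix j show "0 \<le> z j * G j c"
            proof (cases "j = c")
              case True then show ?thesis using zout False by simp
            next
              case False then show ?thesis using z0 Gmz by simp
            qed
          qed
          ultimately show ?thesis using Pn unfolding nefc_def by (metis add_nonneg_nonneg)
        qed
      qed
      show ?thesis
      proof (cases "\<forall>i. P' i \<le> D i")
        case True
        have b: "\<forall>i. 0 \<le> P' i \<and> P' i \<le> D i"
        proof
          fix i
          have "P i \<le> P' i" using z0[of i] unfolding z_def by simp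
          then show "0 \<le> P' i \<and> P' i \<le> D i" using Pb True by (meson order_trans)
        qed
        have zc: "\<forall>c. P' c < D c \<longrightarrow> (\<Sum>j\<in>S. P' j * G j c) = 0"
        proof (intro allI impI)
          fix c assume "P' c < D c"
          then have "c \<in> T" unfolding P'_def by (cases "c \<in> T") auto
          then show "(\<Sum>j\<in>S. P' j * G j c) = 0" by (rule P'zero)
        qed
        have "{i. P' i < D i} \<subseteq> T" unfolding P'_def by auto
        then have "ndT G {i. P' i < D i}" using ndT_subset[OF finT _ nd] by blast
        then show ?thesis using b P'n zc by blast
      next
        case False
        define W where "W = {i\<in>T. D i < P' i}"
        have finW: "finite W" using finT unfolding W_def by simp
        have Wne: "W \<noteq> {}"
        proof -
          obtain i where "D i < P' i" using False by (auto simp: not_le)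
          then have "i \<in> W" unfolding W_def P'_def by (cases "i \<in> T") auto
          then show ?thesis by blast
        qed
        define ratio where "ratio = (\<lambda>i. (D i - P i) / z i)"
        define mu where "mu = Min (ratio ` W)"
        have "mu \<in> ratio ` W" unfolding mu_def using finW Wne by (intro Min_in) auto
        then obtain i0 where i0: "i0 \<in> W" "mu = ratio i0" by auto
        have mule: "\<And>i. i \<in> W \<Longrightarrow> mu \<le> ratio i" unfolding mu_def using finW by (intro Min_le) auto
        have Wprop: "\<And>i. i \<in> W \<Longrightarrow> P i < D i \<and> D i - P i < z i"
          unfolding W_def T_def z_def by auto
        have mupos: "0 < mu" using i0 Wprop[OF i0(1)] unfolding ratio_def by simp
        have mu1: "mu < 1" using i0 Wprop[OF i0(1)] unfolding ratio_def by simp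
        define P1 where "P1 = (\<lambda>i. P i + mu * z i)"
        have P1b: "\<forall>i. 0 \<le> P1 i \<and> P1 i \<le> D i"
        proof
          fix i
          have nn: "0 \<le> P1 i" using Pb z0 mupos unfolding P1_def by simp
          have "P1 i \<le> D i"
          proof (cases "i \<in> W")
            case True
            have zi: "0 < z i" using Wprop[OF True] by linarith
            have "mu \<le> (D i - P i) / z i" using mule[OF True] unfolding ratio_def .
            then have "mu * z i \<le> D i - P i" using zi by (simp add: pos_le_divide_eq)
            then show ?thesis unfolding P1_def by simp
          next
            case False
            then have "P' i \<le> D i" unfolding W_def P'_def by auto
            then have "z i \<le> D i - P i" unfolding z_def by simp
            moreover have "mu * z i \<le> z i" using mult_right_mono[OF less_imp_le[OF mu1] z0[of i]] by simp
            ultimately show ?thesis unfolding P1_def by simp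
          qed
          then show "0 \<le> P1 i \<and> P1 i \<le> D i" using nn by simp
        qed
        have P1n: "nefc S G P1"
          unfolding nefc_def
        proof
          fix c
          have "(\<Sum>j\<in>S. P1 j * G j c) = (1 - mu) * (\<Sum>j\<in>S. P j * G j c) + mu * (\<Sum>j\<in>S. P' j * G j c)"
            unfolding P1_def z_def by (simp add: algebra_simps sum.distrib sum_distrib_left sum_subtractf)
          moreover have "0 \<le> (\<Sum>j\<in>S. P j * G j c)" "0 \<le> (\<Sum>j\<in>S. P' j * G j c)"
            using Pn P'n unfolding nefc_def by auto
          ultimately show "0 \<le> (\<Sum>j\<in>S. P1 j * G j c)" using mupos mu1 by simp
        qed
        have sub: "{i. P1 i < D i} \<subset> T"
        proof -
          have "{i. P1 i < D i} \<subseteq> T" using z0 mupos unfolding P1_def T_def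
            by (auto intro: le_less_trans[rotated] simp: mult_nonneg_nonneg)
          moreover have "i0 \<in> T" using i0(1) unfolding W_def by simp
          moreover have "P1 i0 = D i0" using i0 Wprop[OF i0(1)] unfolding P1_def ratio_def by simp
          ultimately show ?thesis by auto
        qed
        show ?thesis using IH[OF P1b P1n sub] .
      qed
    qed
  qed
qed



lemma le_lemma:
  fixes P1 N1 P2 N2 D :: "'p \<Rightarrow> rat" and G :: "'p \<Rightarrow> 'p \<Rightarrow> rat"
  assumes finS: "finite S" and sy: "symm G" and mz: "metz G"
    and D1: "\<And>i. D i = P1 i + N1 i" and D2: "\<And>i. D i = P2 i + N2 i"
    and N1nn: "\<And>i. 0 \<le> N1 i" and N2nn: "\<And>i. 0 \<le> N2 i"
    and N2out: "\<And>i. i \<notin> S \<Longrightarrow> N2 i = 0"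
    and nef1: "\<And>c. 0 \<le> (\<Sum>j\<in>S. P1 j * G j c)"
    and zero2: "\<And>c. 0 < N2 c \<Longrightarrow> (\<Sum>j\<in>S. P2 j * G j c) = 0"
    and nd2: "(\<forall>i. N2 i = 0) \<or> ndT G {i. N2 i \<noteq> 0}"
    and P12out: "\<And>i. i \<notin> S \<Longrightarrow> P1 i = P2 i"
  shows "P1 i \<le> P2 i"
proof (rule ccontr)
  assume "\<not> P1 i \<le> P2 i"
  then have i: "P2 i < P1 i" by simp
  define U where "U = {i. N2 i \<noteq> 0}"
  have US: "U \<subseteq> S" using N2out unfolding U_def by blast
  have finU: "finite U" using finite_subset[OF US finS] .
  have Gsym: "\<And>i j. G i j = G j i" using sy unfolding symm_def by blast
  have Gmz: "\<And>i j. i \<noteq> j \<Longrightarrow> 0 \<le> G i j" using mz unfolding metz_def by blast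
  define m where "m = (\<lambda>i. if P2 i < P1 i then P1 i - P2 i else 0)"
  define n where "n = (\<lambda>i. if P2 i < P1 i then 0 else P2 i - P1 i)"
  have mn: "\<And>j. m j = (P1 j - P2 j) + n j" unfolding m_def n_def by simp
  have mpos: "\<And>j. m j \<noteq> 0 \<Longrightarrow> 0 < N2 j"
  proof -
    fix j assume "m j \<noteq> 0"
    then have "P2 j < P1 j" unfolding m_def by (auto split: if_splits)
    then show "0 < N2 j" using D1[of j] D2[of j] N1nn[of j] by linarith
  qed
  have N2i: "0 < N2 i" using D1[of i] D2[of i] N1nn[of i] i by linarith
  then have nd: "ndT G U" using nd2 unfolding U_def by force
  have mU: "\<And>j. j \<notin> U \<Longrightarrow> m j = 0" using mpos unfolding U_def by force
  have "(\<Sum>i\<in>U. \<Sum>j\<in>U. m i * m j * G i j) < 0"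
  proof (rule ndT_rat[OF nd])
    show "\<exists>i\<in>U. m i \<noteq> 0" using i N2i unfolding U_def m_def by (intro bexI[of _ i]) auto
  qed
  moreover have "0 \<le> (\<Sum>i\<in>U. \<Sum>j\<in>U. m i * m j * G i j)"
  proof -
    have eq: "(\<Sum>i\<in>U. \<Sum>j\<in>U. m i * m j * G i j) = (\<Sum>i\<in>U. m i * (\<Sum>j\<in>U. m j * G i j))"
      by (simp add: sum_distrib_left algebra_simps)
    have "0 \<le> m k * (\<Sum>j\<in>U. m j * G k j)" if kU: "k \<in> U" for k
    proof (cases "m k = 0")
      case True then show ?thesis by simp
    next
      case False
      then have mk: "0 < m k" and Pk: "P2 k < P1 k" unfolding m_def by (auto split: if_splits)
      have z2: "(\<Sum>j\<in>S. P2 j * G j k) = 0" using zero2 mpos False by blast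
      have "(\<Sum>j\<in>U. m j * G k j) = (\<Sum>j\<in>S. m j * G j k)"
      proof -
        have "(\<Sum>j\<in>S. m j * G j k) = (\<Sum>j\<in>U. m j * G j k)"
          using finS US mU by (intro sum.mono_neutral_right) auto
        then show ?thesis using Gsym by simp
      qed
      also have "\<dots> = (\<Sum>j\<in>S. P1 j * G j k) - (\<Sum>j\<in>S. P2 j * G j k) + (\<Sum>j\<in>S. n j * G j k)"
        unfolding mn by (simp add: algebra_simps sum.distrib sum_subtractf)
      also have "0 \<le> \<dots>"
      proof -
        have "0 \<le> (\<Sum>j\<in>S. n j * G j k)"
        proof (intro sum_nonneg)
          fix j
          show "0 \<le> n j * G j k"
          proof (cases "j = k")
            case True then show ?thesis using Pk unfolding n_def by simp
          next
            case False
            have "0 \<le> n j" unfolding n_def by simp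
            then show ?thesis using Gmz[OF False] by simp
          qed
        qed
        then show ?thesis using nef1[of k] z2 by simp
      qed
      finally show ?thesis using mk by simp
    qed
    then show ?thesis unfolding eq by (intro sum_nonneg) auto
  qed
  ultimately show False by linarith
qed



theorem theorem3:
  fixes q :: "('p \<Rightarrow> rat) \<Rightarrow> ('p \<Rightarrow> rat) \<Rightarrow> rat"
    and D :: "'p \<Rightarrow> rat"
  assumes "sym_bilinear q"
    and "intersection_product q"
    and "effective D"
  shows "\<exists>!(P, N). effective P \<and> effective N \<and> D = (\<lambda>x. P x + N x) \<and>
            q_nef q P \<and> (N = (\<lambda>_. 0) \<or> q_exceptional q N) \<and> q P N = 0"
proof -
  note sb = assms(1) and ip = assms(2) and eD = assms(3)
  define S where "S = {p. D p \<noteq> 0}"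
  have finS: "finite S" using eD unfolding S_def effective_def qdivs_def by blast
  have Dnn: "\<And>i. 0 \<le> D i" using eD unfolding effective_def by blast
  have Dout: "\<forall>i. i \<notin> S \<longrightarrow> D i = 0" unfolding S_def by blast
  define G where "G = (\<lambda>i j. q (prime_div i) (prime_div j))"
  have sy: "symm G"
  proof -
    have "\<forall>D\<in>qdivs. \<forall>E\<in>qdivs. q D E = q E D" using sb unfolding sym_bilinear_def by blast
    note H = this
    show ?thesis unfolding symm_def G_def
      using H[rule_format, OF prime_div_qdivs prime_div_qdivs] by (intro allI) assumption
  qed
  have mz: "metz G" unfolding metz_def G_def
    using ip[unfolded intersection_product_def, rule_format] by (intro allI impI)
  have qe: "\<And>X c. (\<forall>x. x \<notin> S \<longrightarrow> X x = 0) \<Longrightarrow> q X (prime_div c) = (\<Sum>j\<in>S. X j * G j c)"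
    using expand1[OF sb prime_div_qdivs finS] unfolding G_def by blast
  have inq: "\<And>X. (\<forall>x. x \<notin> S \<longrightarrow> X x = 0) \<Longrightarrow> X \<in> qdivs"
  proof -
    fix X :: "'p \<Rightarrow> rat" assume "\<forall>x. x \<notin> S \<longrightarrow> X x = 0"
    then have "{p. X p \<noteq> 0} \<subseteq> S" by blast
    then show "X \<in> qdivs" using finS finite_subset unfolding qdivs_def by blast
  qed
  have props: "\<And>P N. effective P \<Longrightarrow> effective N \<Longrightarrow> D = (\<lambda>x. P x + N x) \<Longrightarrow>
            q_nef q P \<Longrightarrow> (N = (\<lambda>_. 0) \<or> q_exceptional q N) \<Longrightarrow> q P N = 0 \<Longrightarrow>
     (\<forall>i. i \<notin> S \<longrightarrow> P i = 0) \<and> (\<forall>i. i \<notin> S \<longrightarrow> N i = 0) \<and> (\<forall>c. 0 \<le> (\<Sum>j\<in>S. P j * G j c)) \<and>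
     (\<forall>c. 0 < N c \<longrightarrow> (\<Sum>j\<in>S. P j * G j c) = 0) \<and> ((\<forall>i. N i = 0) \<or> ndT G {i. N i \<noteq> 0})"
  proof -
    fix P N :: "'p \<Rightarrow> rat"
    assume eP: "effective P" and eN: "effective N" and DPN: "D = (\<lambda>x. P x + N x)"
      and nP: "q_nef q P" and exN: "N = (\<lambda>_. 0) \<or> q_exceptional q N" and qPN: "q P N = 0"
    have Pnn: "\<And>i. 0 \<le> P i" and Nnn: "\<And>i. 0 \<le> N i" using eP eN unfolding effective_def by auto
    have Dsum: "\<And>i. D i = P i + N i" using DPN by simp
    have Pout: "\<forall>i. i \<notin> S \<longrightarrow> P i = 0" and Nout: "\<forall>i. i \<notin> S \<longrightarrow> N i = 0"
      using Dout Dsum Pnn Nnn by (metis add_nonneg_eq_0_iff)+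
    have nefq: "\<And>c. 0 \<le> q P (prime_div c)"
    proof -
      fix c :: 'p
      have "effective (prime_div c)" unfolding effective_def using prime_div_qdivs by (simp add: prime_div_def)
      moreover have "\<forall>p. prime_div c p \<in> \<int>" by (simp add: prime_div_def)
      ultimately show "0 \<le> q P (prime_div c)" using nP unfolding q_nef_def by blast
    qed
    have nef: "\<forall>c. 0 \<le> (\<Sum>j\<in>S. P j * G j c)" using nefq qe[OF Pout] by simp
    have Pq: "P \<in> qdivs" using eP unfolding effective_def by blast
    have "q P N = (\<Sum>c\<in>S. N c * q P (prime_div c))" using expand2[OF sb Pq finS Nout] .
    then have s0: "(\<Sum>c\<in>S. N c * q P (prime_div c)) = 0" using qPN by simp
    have nn: "\<And>c. c \<in> S \<Longrightarrow> 0 \<le> N c * q P (prime_div c)"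
      using nefq Nnn by (simp add: mult_nonneg_nonneg)
    have each: "\<forall>c\<in>S. N c * q P (prime_div c) = 0"
      using sum_nonneg_eq_0_iff[OF finS nn] s0 by simp
    have zero: "\<forall>c. 0 < N c \<longrightarrow> (\<Sum>j\<in>S. P j * G j c) = 0"
    proof (intro allI impI)
      fix c assume "0 < N c"
      then have "c \<in> S" using Nout by force
      then have "q P (prime_div c) = 0" using each \<open>0 < N c\<close> by force
      then show "(\<Sum>j\<in>S. P j * G j c) = 0" using qe[OF Pout] by simp
    qed
    have nd: "(\<forall>i. N i = 0) \<or> ndT G {i. N i \<noteq> 0}"
    proof (cases "N = (\<lambda>_. 0)")
      case True then show ?thesis by simp
    next
      case False
      then have "q_exceptional q N" using exN by blast
      then have "ndT G {i. N i \<noteq> 0}" unfolding q_exceptional_def ndT_def supp_div_def G_def by blast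
      then show ?thesis by blast
    qed
    show "?thesis P N" using Pout Nout nef zero nd by blast
  qed
  obtain P' where P'b: "\<forall>i. 0 \<le> P' i \<and> P' i \<le> D i" and P'n: "nefc S G P'"
    and P'z: "\<forall>c. P' c < D c \<longrightarrow> (\<Sum>j\<in>S. P' j * G j c) = 0" and P'nd: "ndT G {i. P' i < D i}"
  proof -
    have "\<forall>i. 0 \<le> (0::rat) \<and> 0 \<le> D i" using Dnn by simp
    moreover have "nefc S G (\<lambda>_. 0)" by (simp add: nefc_def)
    note h = this
    have E: "\<forall>P. (\<forall>i. 0 \<le> P i \<and> P i \<le> D i) \<longrightarrow> nefc S G P \<longrightarrow> card {i. P i < D i} = card {i. (0::rat) < D i} \<longrightarrow>
      (\<exists>P'. (\<forall>i. 0 \<le> P' i \<and> P' i \<le> D i) \<and> nefc S G P' \<and>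
       (\<forall>c. P' c < D c \<longrightarrow> (\<Sum>j\<in>S. P' j * G j c) = 0) \<and> ndT G {i. P' i < D i})"
      by (rule exist_coord[OF finS Dout sy mz])
    have "card {i. (\<lambda>_. (0::rat)) i < D i} = card {i. (0::rat) < D i}" by simp
    then have "\<exists>P'. (\<forall>i. 0 \<le> P' i \<and> P' i \<le> D i) \<and> nefc S G P' \<and>
       (\<forall>c. P' c < D c \<longrightarrow> (\<Sum>j\<in>S. P' j * G j c) = 0) \<and> ndT G {i. P' i < D i}"
      using spec[OF E, of "\<lambda>_. 0"] h Dnn by simp
    then show ?thesis using that by blast
  qed
  define N' where "N' = (\<lambda>i. D i - P' i)"
  have P'out: "\<forall>x. x \<notin> S \<longrightarrow> P' x = 0" using P'b Dout by (metis antisym)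
  have N'out: "\<forall>x. x \<notin> S \<longrightarrow> N' x = 0" using P'out Dout unfolding N'_def by simp
  have P'q: "P' \<in> qdivs" using inq[OF P'out] .
  have eP': "effective P'" unfolding effective_def using P'q P'b by blast
  have eN': "effective N'" unfolding effective_def using inq[OF N'out] P'b unfolding N'_def by simp
  have DPN': "D = (\<lambda>x. P' x + N' x)" unfolding N'_def by simp
  have qe': "\<And>c. q P' (prime_div c) = (\<Sum>j\<in>S. P' j * G j c)" using qe[OF P'out] .
  have nef': "q_nef q P'"
    unfolding q_nef_def
  proof (intro allI impI)
    fix E :: "'p \<Rightarrow> rat" assume "effective E \<and> (\<forall>p. E p \<in> \<int>)"
    then have eE: "effective E" by blast
    define SE where "SE = {p. E p \<noteq> 0}"
    have finSE: "finite SE" using eE unfolding SE_def effective_def qdivs_def by blast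
    have "q P' E = (\<Sum>j\<in>SE. E j * q P' (prime_div j))"
      using expand2[OF sb P'q finSE] unfolding SE_def by blast
    also have "0 \<le> \<dots>"
      using eE P'n qe' unfolding effective_def nefc_def by (intro sum_nonneg mult_nonneg_nonneg) auto
    finally show "0 \<le> q P' E" .
  qed
  have suppN': "{i. N' i \<noteq> 0} = {i. P' i < D i}"
    unfolding N'_def
  proof (rule Collect_cong)
    fix i
    have "P' i \<le> D i" using P'b by blast
    then show "(D i - P' i \<noteq> 0) = (P' i < D i)" by auto
  qed
  have exc': "N' = (\<lambda>_. 0) \<or> q_exceptional q N'"
  proof (cases "{i. P' i < D i} = {}")
    case True
    then have "N' = (\<lambda>_. 0)" using suppN' by auto
    then show ?thesis by blast
  next
    case False
    have "q_exceptional q N'"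
      using eN' P'nd unfolding q_exceptional_def supp_div_def suppN' ndT_def G_def by blast
    then show ?thesis by blast
  qed
  have qPN': "q P' N' = 0"
  proof -
    have "q P' N' = (\<Sum>c\<in>S. N' c * q P' (prime_div c))" using expand2[OF sb P'q finS N'out] .
    also have "\<dots> = 0"
    proof (intro sum.neutral ballI)
      fix c assume "c \<in> S"
      show "N' c * q P' (prime_div c) = 0"
      proof (cases "P' c < D c")
        case True then show ?thesis using P'z qe' by simp
      next
        case False then have "N' c = 0" using P'b unfolding N'_def by (metis antisym not_less diff_self)
        then show ?thesis by simp
      qed
    qed
    finally show ?thesis .
  qed
  have uniq: "\<And>P1 N1 P2 N2. effective P1 \<Longrightarrow> effective N1 \<Longrightarrow> D = (\<lambda>x. P1 x + N1 x) \<Longrightarrow>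
            q_nef q P1 \<Longrightarrow> (N1 = (\<lambda>_. 0) \<or> q_exceptional q N1) \<Longrightarrow> q P1 N1 = 0 \<Longrightarrow>
            effective P2 \<Longrightarrow> effective N2 \<Longrightarrow> D = (\<lambda>x. P2 x + N2 x) \<Longrightarrow>
            q_nef q P2 \<Longrightarrow> (N2 = (\<lambda>_. 0) \<or> q_exceptional q N2) \<Longrightarrow> q P2 N2 = 0 \<Longrightarrow>
            P1 = P2 \<and> N1 = N2"
  proof -
    fix P1 N1 P2 N2 :: "'p \<Rightarrow> rat"
    assume a1: "effective P1" "effective N1" "D = (\<lambda>x. P1 x + N1 x)"
            "q_nef q P1" "(N1 = (\<lambda>_. 0) \<or> q_exceptional q N1)" "q P1 N1 = 0"
      and a2: "effective P2" "effective N2" "D = (\<lambda>x. P2 x + N2 x)"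
            "q_nef q P2" "(N2 = (\<lambda>_. 0) \<or> q_exceptional q N2)" "q P2 N2 = 0"
    have p1: "(\<forall>i. i \<notin> S \<longrightarrow> P1 i = 0) \<and> (\<forall>i. i \<notin> S \<longrightarrow> N1 i = 0) \<and> (\<forall>c. 0 \<le> (\<Sum>j\<in>S. P1 j * G j c)) \<and>
     (\<forall>c. 0 < N1 c \<longrightarrow> (\<Sum>j\<in>S. P1 j * G j c) = 0) \<and> ((\<forall>i. N1 i = 0) \<or> ndT G {i. N1 i \<noteq> 0})"
      using props[OF a1] .
    have p2: "(\<forall>i. i \<notin> S \<longrightarrow> P2 i = 0) \<and> (\<forall>i. i \<notin> S \<longrightarrow> N2 i = 0) \<and> (\<forall>c. 0 \<le> (\<Sum>j\<in>S. P2 j * G j c)) \<and>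
     (\<forall>c. 0 < N2 c \<longrightarrow> (\<Sum>j\<in>S. P2 j * G j c) = 0) \<and> ((\<forall>i. N2 i = 0) \<or> ndT G {i. N2 i \<noteq> 0})"
      using props[OF a2] .
    have D1: "\<And>i. D i = P1 i + N1 i" using a1(3) by simp
    have D2: "\<And>i. D i = P2 i + N2 i" using a2(3) by simp
    have N1nn: "\<And>i. 0 \<le> N1 i" using a1(2) unfolding effective_def by blast
    have N2nn: "\<And>i. 0 \<le> N2 i" using a2(2) unfolding effective_def by blast
    have o12: "\<And>i. i \<notin> S \<Longrightarrow> P1 i = P2 i" using p1 p2 by simp
    have le1: "P1 i \<le> P2 i" for i
    proof (rule le_lemma[OF finS sy mz D1 D2 N1nn N2nn])
      show "\<And>i. i \<notin> S \<Longrightarrow> N2 i = 0" using p2 by blast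
      show "\<And>c. 0 \<le> (\<Sum>j\<in>S. P1 j * G j c)" using p1 by blast
      show "\<And>c. 0 < N2 c \<Longrightarrow> (\<Sum>j\<in>S. P2 j * G j c) = 0" using p2 by blast
      show "(\<forall>i. N2 i = 0) \<or> ndT G {i. N2 i \<noteq> 0}" using p2 by blast
      show "\<And>i. i \<notin> S \<Longrightarrow> P1 i = P2 i" by (rule o12)
    qed
    have le2: "P2 i \<le> P1 i" for i
    proof (rule le_lemma[OF finS sy mz D2 D1 N2nn N1nn])
      show "\<And>i. i \<notin> S \<Longrightarrow> N1 i = 0" using p1 by blast
      show "\<And>c. 0 \<le> (\<Sum>j\<in>S. P2 j * G j c)" using p2 by blast
      show "\<And>c. 0 < N1 c \<Longrightarrow> (\<Sum>j\<in>S. P1 j * G j c) = 0" using p1 by blast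
      show "(\<forall>i. N1 i = 0) \<or> ndT G {i. N1 i \<noteq> 0}" using p1 by blast
      show "\<And>i. i \<notin> S \<Longrightarrow> P2 i = P1 i" using o12 by metis
    qed
    have "P1 = P2" using le1 le2 by (intro ext antisym) auto
    moreover have "N1 = N2"
    proof (rule ext)
      fix i
      show "N1 i = N2 i" using D1[of i] D2[of i] fun_cong[OF \<open>P1 = P2\<close>, of i] by linarith
    qed
    ultimately show "P1 = P2 \<and> N1 = N2" by blast
  qed
  show ?thesis
  proof (rule ex1I[of _ "(P', N')"])
    show "case (P', N') of (P, N) \<Rightarrow> effective P \<and> effective N \<and> D = (\<lambda>x. P x + N x) \<and>
            q_nef q P \<and> (N = (\<lambda>_. 0) \<or> q_exceptional q N) \<and> q P N = 0"
      unfolding prod.case using eP' eN' DPN' nef' exc' qPN' by (intro conjI)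
  next
    fix y :: "('p \<Rightarrow> rat) \<times> ('p \<Rightarrow> rat)"
    assume h: "case y of (P, N) \<Rightarrow> effective P \<and> effective N \<and> D = (\<lambda>x. P x + N x) \<and>
            q_nef q P \<and> (N = (\<lambda>_. 0) \<or> q_exceptional q N) \<and> q P N = 0"
    obtain P N where y: "y = (P, N)" by (cases y)
    have h': "effective P \<and> effective N \<and> D = (\<lambda>x. P x + N x) \<and>
            q_nef q P \<and> (N = (\<lambda>_. 0) \<or> q_exceptional q N) \<and> q P N = 0"
      using h unfolding y prod.case .
    then have b: "effective P" "effective N" "D = (\<lambda>x. P x + N x)"
            "q_nef q P" "(N = (\<lambda>_. 0) \<or> q_exceptional q N)" "q P N = 0" by blast+
    have "P = P' \<and> N = N'" by (rule uniq[OF b eP' eN' DPN' nef' exc' qPN'])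
    then show "y = (P', N')" unfolding y by blast
  qed
qed


end
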